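(* Let $X$ be a nonempty metric space such that (1) every closed bounded ball in $X$ is compact, and (2) there exist $x_0\in X$ and $r>0$ such that for every $y\in X$ and every $\lambda>1$ there is a $\lambda$-bi-Lipschitz auto-homeomorphism $f$ of $X$ with $d(f(y),x_0)<r$. Then $X$ is almost-isometry unique.
   Context: For $\lambda>1$, an injection $f$ between metric spaces is $\lambda$-bi-Lipschitz if for all distinct $a,b$ in its domain, $d(f(a),f(b))<\lambda d(a,b)$ and $d(a,b)<\lambda d(f(a),f(b))$. Two metric spaces $X,Y$ are almost isometric if for every $\lambda>1$ there is a $\lambda$-bi-Lipschitz bijection (homeomorphism) from $X$ onto $Y$. A metric space $X$ is almost-isometry unique if every metric space almost isometric to $X$ is isometric to $X$. *)

theory Defs
  imports "HOL-Analysis.Analysis"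
begin

definition bi_lipschitz ::
  "real \<Rightarrow> ('a \<Rightarrow> 'b) \<Rightarrow> 'a set \<Rightarrow> ('a \<Rightarrow> 'a \<Rightarrow> real) \<Rightarrow> 'b set \<Rightarrow> ('b \<Rightarrow> 'b \<Rightarrow> real) \<Rightarrow> bool"
  where "bi_lipschitz lam f M d N e \<longleftrightarrow>
     f ` M \<subseteq> N \<and> inj_on f M \<and>
     (\<forall>a\<in>M. \<forall>b\<in>M. a \<noteq> b \<longrightarrow>
        e (f a) (f b) < lam * d a b \<and> d a b < lam * e (f a) (f b))"

definition almost_isometric ::
  "'a set \<Rightarrow> ('a \<Rightarrow> 'a \<Rightarrow> real) \<Rightarrow> 'b set \<Rightarrow> ('b \<Rightarrow> 'b \<Rightarrow> real) \<Rightarrow> bool"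
  where "almost_isometric M d N e \<longleftrightarrow>
     (\<forall>lam>1. \<exists>f. bij_betw f M N \<and>
        homeomorphic_map (Metric_space.mtopology M d) (Metric_space.mtopology N e) f \<and>
        bi_lipschitz lam f M d N e)"

definition isometric ::
  "'a set \<Rightarrow> ('a \<Rightarrow> 'a \<Rightarrow> real) \<Rightarrow> 'b set \<Rightarrow> ('b \<Rightarrow> 'b \<Rightarrow> real) \<Rightarrow> bool"
  where "isometric M d N e \<longleftrightarrow>
     (\<exists>f. bij_betw f M N \<and> (\<forall>a\<in>M. \<forall>b\<in>M. e (f a) (f b) = d a b))"

end

theory Submission imports Defs begin

lemma eps_le:
  fixes a b c :: real
  assumes "\<And>t. 0 < t \<Longrightarrow> t \<le> 1 \<Longrightarrow> a \<le> b + t * c"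
  shows "a \<le> b"
proof (rule ccontr)
  assume "\<not> a \<le> b"
  show False
  proof (cases "c > 0")
    case True
    define t where "t = min 1 ((a - b) / (2*c))"
    have t: "0 < t" "t \<le> 1" "t \<le> (a-b)/(2*c)" using True \<open>\<not> a \<le> b\<close> by (auto simp: t_def)
    have "t * c \<le> (a-b)/2" using t(3) True by (simp add: field_simps)
    moreover have "a \<le> b + t * c" using assms[OF t(1,2)] .
    ultimately have "a - b \<le> (a - b) / 2" by linarith
    then show False using \<open>\<not> a \<le> b\<close> by (simp add: field_simps)
  next
    case False
    then show False using assms[of 1] \<open>\<not> a \<le> b\<close> by linarith
  qed
qed

lemma mu_eventually:
  fixes \<delta> :: real assumes "\<delta> > 0"
  shows "\<exists>k. \<forall>n\<ge>k. (1 + 1/(real n + 1)) * (1 + 1/(real n + 1)) \<le> 1 + \<delta>"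
proof -
  obtain k :: nat where k: "real k > 3/\<delta>" using reals_Archimedean2 by blast
  show ?thesis
  proof (intro exI allI impI)
    fix n assume "k \<le> n"
    define t where "t = 1/(real n + 1)"
    have t0: "0 < t" "t \<le> 1" by (auto simp: t_def)
    have "real n > 3/\<delta>" using k \<open>k \<le> n\<close> by linarith
    hence "3 / \<delta> < real n + 1" by linarith
    hence "3 < \<delta> * (real n + 1)" using assms by (simp add: field_simps)
    hence "3 * t < \<delta>" unfolding t_def by (simp add: field_simps)
    moreover have "(1+t)*(1+t) \<le> 1 + 3*t" using t0 by (simp add: algebra_simps power2_eq_square)
    ultimately show "(1 + 1/(real n + 1)) * (1 + 1/(real n + 1)) \<le> 1 + \<delta>" unfolding t_def[symmetric] by linarith
  qed
qed

lemma bl_le: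
  assumes "bi_lipschitz lam f M d N e" "Metric_space M d" "Metric_space N e" "a \<in> M" "b \<in> M"
  shows "e (f a) (f b) \<le> lam * d a b \<and> d a b \<le> lam * e (f a) (f b)"
proof (cases "a = b")
  case True
  have "f a \<in> N" using assms unfolding bi_lipschitz_def by auto
  then show ?thesis using True assms(2,3,4) Metric_space.mdist_zero[of M d a] Metric_space.mdist_zero[of N e "f a"] by simp
next
  case False
  then show ?thesis using assms unfolding bi_lipschitz_def by (meson less_eq_real_def)
qed

theorem theorem3p1:
  fixes M :: "'a set" and d :: "'a \<Rightarrow> 'a \<Rightarrow> real"
    and N :: "'b set" and e :: "'b \<Rightarrow> 'b \<Rightarrow> real"
  assumes X: "Metric_space M d" and ne: "M \<noteq> {}"
    and proper: "\<And>x r. x \<in> M \<Longrightarrow>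
       compactin (Metric_space.mtopology M d) (Metric_space.mcball M d x r)"
    and homog: "\<exists>x0\<in>M. \<exists>r>0. \<forall>y\<in>M. \<forall>lam>1. \<exists>f.
       bij_betw f M M \<and>
       homeomorphic_map (Metric_space.mtopology M d) (Metric_space.mtopology M d) f \<and>
       bi_lipschitz lam f M d M d \<and> d (f y) x0 < r"
    and Y: "Metric_space N e"
    and ai: "almost_isometric M d N e"
  shows "isometric M d N e"
proof -
  interpret MX: Metric_space M d by (rule X)
  interpret NY: Metric_space N e by (rule Y)
  obtain x0 r where x0: "x0 \<in> M" and r: "r > 0" and hom: "\<forall>y\<in>M. \<forall>lam>1. \<exists>f.
       bij_betw f M M \<and>
       homeomorphic_map MX.mtopology MX.mtopology f \<and>
       bi_lipschitz lam f M d M d \<and> d (f y) x0 < r" using homog by blast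
  obtain f2 where "bij_betw f2 M N" using ai unfolding almost_isometric_def
    by (meson one_less_numeral_iff semiring_norm(76))
  then obtain y0 where y0: "y0 \<in> N" using ne unfolding bij_betw_def by blast
  define \<mu> where "\<mu> n = 1 + 1/(real n + 1)" for n :: nat
  define L where "L n = \<mu> n * \<mu> n" for n
  have mu1: "\<mu> n > 1" for n by (simp add: \<mu>_def)
  have L1: "L n \<ge> 1" for n
  proof -
    have "1 * 1 \<le> \<mu> n * \<mu> n" using mu1[of n] by (intro mult_mono) auto
    thus ?thesis unfolding L_def by simp
  qed
  have L4: "L n \<le> 4" for n
  proof -
    have "\<mu> n \<le> 2" by (simp add: \<mu>_def)
    hence "\<mu> n * \<mu> n \<le> 2 * 2" using mu1[of n] by (intro mult_mono) auto
    thus ?thesis unfolding L_def by simp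
  qed
  have Lev: "\<exists>k. \<forall>n\<ge>k. L n \<le> 1 + \<delta>" if "\<delta> > 0" for \<delta>
    using mu_eventually[OF that] unfolding L_def \<mu>_def by blast
  have A: "\<exists>G. bij_betw G N M \<and> (\<forall>a\<in>N. \<forall>b\<in>N. d (G a) (G b) \<le> L n * e a b \<and> e a b \<le> L n * d (G a) (G b))
     \<and> d (G y0) x0 < r" for n
  proof -
    obtain g where g: "bij_betw g M N" "bi_lipschitz (\<mu> n) g M d N e"
      using ai mu1[of n] unfolding almost_isometric_def by blast
    define x1 where "x1 = inv_into M g y0"
    have x1: "x1 \<in> M" "g x1 = y0" using g(1) y0 unfolding x1_def
      by (auto simp: bij_betw_def inv_into_into f_inv_into_f)
    obtain h where h: "bij_betw h M M" "bi_lipschitz (\<mu> n) h M d M d" "d (h x1) x0 < r"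
      using hom x1(1) mu1[of n] by blast
    define G where "G = h \<circ> inv_into M g"
    have bg: "bij_betw (inv_into M g) N M" using g(1) by (rule bij_betw_inv_into)
    have "bij_betw G N M" unfolding G_def using bg h(1) by (rule bij_betw_trans)
    moreover have "d (G a) (G b) \<le> L n * e a b \<and> e a b \<le> L n * d (G a) (G b)" if "a \<in> N" "b \<in> N" for a b
    proof -
      define a' where "a' = inv_into M g a"
      define b' where "b' = inv_into M g b"
      have a': "a' \<in> M" "g a' = a" using g(1) that unfolding a'_def
        by (auto simp: bij_betw_def inv_into_into f_inv_into_f)
      have b': "b' \<in> M" "g b' = b" using g(1) that unfolding b'_def
        by (auto simp: bij_betw_def inv_into_into f_inv_into_f)
      have 1: "e a b \<le> \<mu> n * d a' b' \<and> d a' b' \<le> \<mu> n * e a b"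
        using bl_le[OF g(2) X Y a'(1) b'(1)] a' b' by simp
      have 2: "d (h a') (h b') \<le> \<mu> n * d a' b' \<and> d a' b' \<le> \<mu> n * d (h a') (h b')"
        using bl_le[OF h(2) X X a'(1) b'(1)] by simp
      have GE: "G a = h a'" "G b = h b'" unfolding G_def a'_def b'_def by auto
      have m0: "\<mu> n > 0" using mu1[of n] by simp
      have "d (h a') (h b') \<le> \<mu> n * (\<mu> n * e a b)"
        using 1 2 m0 by (meson mult_left_mono less_imp_le order_trans)
      moreover have "e a b \<le> \<mu> n * (\<mu> n * d (h a') (h b'))"
        using 1 2 m0 by (meson mult_left_mono less_imp_le order_trans)
      ultimately show ?thesis unfolding GE L_def by (simp add: mult.assoc)
    qed
    moreover have "d (G y0) x0 < r" using h(3) x1 g(1) unfolding G_def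
      by (simp add: bij_betw_def inv_into_f_f x1_def)
    ultimately show ?thesis by blast
  qed
  then obtain GG where GG: "\<And>n. bij_betw (GG n) N M"
    "\<And>n a b. a \<in> N \<Longrightarrow> b \<in> N \<Longrightarrow> d (GG n a) (GG n b) \<le> L n * e a b"
    "\<And>n a b. a \<in> N \<Longrightarrow> b \<in> N \<Longrightarrow> e a b \<le> L n * d (GG n a) (GG n b)"
    "\<And>n. d (GG n y0) x0 < r"
    by metis
  define FF where "FF n = inv_into N (GG n)" for n
  have FFN: "FF n x \<in> N" if "x \<in> M" for n x
    using GG(1)[of n] that unfolding FF_def by (metis bij_betw_def inv_into_into)
  have GGF: "GG n (FF n x) = x" if "x \<in> M" for n x
    using GG(1)[of n] that unfolding FF_def by (metis bij_betw_def f_inv_into_f)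
  have FGG: "FF n (GG n p) = p" if "p \<in> N" for n p
    using GG(1)[of n] that unfolding FF_def by (metis bij_betw_def inv_into_f_f)
  have GGM: "GG n p \<in> M" if "p \<in> N" for n p
    using GG(1)[of n] that by (metis bij_betwE)
  have FFlip: "e (FF n a) (FF n b) \<le> L n * d a b" if "a \<in> M" "b \<in> M" for n a b
    using GG(3)[of "FF n a" "FF n b" n] FFN[OF that(1)] FFN[OF that(2)] that GGF by simp
  define KM where "KM p = MX.mcball x0 (r + 4 * e p y0)" for p
  define KN where "KN x = NY.mcball y0 (4 * (d x x0 + r))" for x
  have GGK: "GG n p \<in> KM p" if "p \<in> N" for n p
  proof -
    have "d x0 (GG n p) \<le> d x0 (GG n y0) + d (GG n y0) (GG n p)"
      using x0 GGM[OF that] GGM[OF y0] MX.triangle by blast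
    also have "\<dots> \<le> r + L n * e y0 p"
      using GG(4)[of n] GG(2)[OF y0 that, of n] MX.commute[of x0 "GG n y0"] by simp
    also have "\<dots> \<le> r + 4 * e p y0"
      using L4[of n] NY.nonneg[of y0 p] NY.commute[of y0 p] by (simp add: mult_right_mono)
    finally show ?thesis unfolding KM_def using x0 GGM[OF that] by simp
  qed
  have FFK: "FF n x \<in> KN x" if "x \<in> M" for n x
  proof -
    have "e y0 (FF n x) = e (FF n (GG n y0)) (FF n x)" using FGG[OF y0] by simp
    also have "\<dots> \<le> L n * d (GG n y0) x" using FFlip[OF GGM[OF y0] that] .
    also have "\<dots> \<le> 4 * d (GG n y0) x"
      using L4[of n] MX.nonneg[of "GG n y0" x] by (simp add: mult_right_mono)
    also have "\<dots> \<le> 4 * (d x x0 + r)"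
    proof -
      have "d (GG n y0) x \<le> d (GG n y0) x0 + d x0 x" using MX.triangle GGM[OF y0] x0 that by blast
      thus ?thesis using GG(4)[of n] MX.commute[of x0 x] by simp
    qed
    finally show ?thesis unfolding KN_def using y0 FFN[OF that] by simp
  qed
  have Nproper: "compactin NY.mtopology (NY.mcball y0 R)" for R
  proof -
    define K where "K = MX.mcball (GG 0 y0) (4 * R)"
    have cK: "compactin MX.mtopology K" unfolding K_def using proper GGM[OF y0] by blast
    have cont: "continuous_map MX.mtopology NY.mtopology (FF 0)"
      unfolding MX.metric_continuous_map[OF Y]
    proof (intro conjI ballI allI impI)
      show "FF 0 ` M \<subseteq> N" using FFN by blast
    next
      fix a and \<epsilon> :: real assume a: "a \<in> M" and \<epsilon>: "\<epsilon> > 0"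
      show "\<exists>\<delta>>0. \<forall>x. x \<in> M \<and> d a x < \<delta> \<longrightarrow> e (FF 0 a) (FF 0 x) < \<epsilon>"
      proof (intro exI conjI allI impI)
        show "\<epsilon> / 4 > 0" using \<epsilon> by simp
        fix x assume x: "x \<in> M \<and> d a x < \<epsilon> / 4"
        have "e (FF 0 a) (FF 0 x) \<le> L 0 * d a x" using FFlip a x by blast
        also have "\<dots> \<le> 4 * d a x" using L4[of 0] MX.nonneg[of a x] by (simp add: mult_right_mono)
        also have "\<dots> < \<epsilon>" using x by simp
        finally show "e (FF 0 a) (FF 0 x) < \<epsilon>" .
      qed
    qed
    have cI: "compactin NY.mtopology (FF 0 ` K)" using image_compactin[OF cK cont] .
    have "NY.mcball y0 R \<subseteq> FF 0 ` K"
    proof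
      fix p assume p: "p \<in> NY.mcball y0 R"
      hence pN: "p \<in> N" and ep: "e y0 p \<le> R" by auto
      have "d (GG 0 y0) (GG 0 p) \<le> L 0 * e y0 p" using GG(2)[OF y0 pN] .
      also have "\<dots> \<le> 4 * e y0 p" using L4[of 0] NY.nonneg[of y0 p] by (simp add: mult_right_mono)
      also have "\<dots> \<le> 4 * R" using ep by simp
      finally have "GG 0 p \<in> K" unfolding K_def using GGM[OF y0] GGM[OF pN] by simp
      thus "p \<in> FF 0 ` K" using FGG[OF pN] by (metis image_eqI)
    qed
    thus ?thesis using closed_compactin[OF cI] NY.closedin_mcball by blast
  qed
  define TM where "TM p = subtopology MX.mtopology (KM p)" for p
  define TN where "TN x = subtopology NY.mtopology (KN x)" for x
  define XX where "XX = prod_topology (product_topology TM N) (product_topology TN M)"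
  define s where "s n = (restrict (GG n) N, restrict (FF n) M)" for n
  have KMM: "KM p \<subseteq> M" for p unfolding KM_def by auto
  have KNN: "KN x \<subseteq> N" for x unfolding KN_def by auto
  have topXX: "topspace XX = (PiE N KM) \<times> (PiE M KN)"
    unfolding XX_def TM_def TN_def using KMM KNN
    by (simp add: Int_absorb1)
  have cXX: "compact_space XX"
  proof -
    have "compact_space (product_topology TM N)"
      unfolding compact_space_product_topology TM_def KM_def
      using compact_space_subtopology[OF proper[OF x0]] by blast
    moreover have "compact_space (product_topology TN M)"
      unfolding compact_space_product_topology TN_def KN_def
      using compact_space_subtopology[OF Nproper] by blast
    ultimately show ?thesis unfolding XX_def compact_space_prod_topology by blast
  qed
  have sX: "s n \<in> topspace XX" for n
    unfolding topXX s_def using GGK FFK by auto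
  define C where "C k = XX closure_of (s ` {k..})" for k
  have "(\<Inter>k. C k) \<noteq> {}"
  proof (rule compact_space_imp_nest[OF cXX])
    show "closedin XX (C k)" for k unfolding C_def by simp
    show "C k \<noteq> {}" for k
    proof -
      have "s ` {k..} \<subseteq> C k" unfolding C_def using sX by (intro closure_of_subset) auto
      thus ?thesis by auto
    qed
    show "decseq C" unfolding decseq_def C_def
      by (intro allI impI closure_of_mono) auto
  qed
  then obtain z where z: "\<And>k. z \<in> C k" by blast
  have clus: "\<exists>n\<ge>k. s n \<in> U" if "openin XX U" "z \<in> U" for U k
    using z[of k] that unfolding C_def in_closure_of by auto
  have zX: "z \<in> topspace XX" using z[of 0] unfolding C_def in_closure_of by auto
  obtain G F where zGF: "z = (G, F)" by fastforce
  have GK: "G p \<in> KM p" if "p \<in> N" for p using zX that unfolding zGF topXX by auto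
  have FK: "F x \<in> KN x" if "x \<in> M" for x using zX that unfolding zGF topXX by auto
  have GM: "G p \<in> M" if "p \<in> N" for p using GK[OF that] KMM by blast
  have FN: "F x \<in> N" if "x \<in> M" for x using FK[OF that] KNN by blast
  have projG: "continuous_map XX MX.mtopology (\<lambda>w. fst w p)" if "p \<in> N" for p
  proof -
    have "continuous_map XX (TM p) ((\<lambda>f. f p) \<circ> fst)"
      unfolding XX_def
      by (rule continuous_map_compose[OF continuous_map_fst continuous_map_product_projection[OF that]])
    thus ?thesis unfolding TM_def continuous_map_in_subtopology by (simp add: o_def)
  qed
  have projF: "continuous_map XX NY.mtopology (\<lambda>w. snd w x)" if "x \<in> M" for x
  proof -
    have "continuous_map XX (TN x) ((\<lambda>f. f x) \<circ> snd)"
      unfolding XX_def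
      by (rule continuous_map_compose[OF continuous_map_snd continuous_map_product_projection[OF that]])
    thus ?thesis unfolding TN_def continuous_map_in_subtopology by (simp add: o_def)
  qed
  have near: "\<exists>n\<ge>k. d (G p) (GG n p) < \<epsilon> \<and> d (G q) (GG n q) < \<epsilon> \<and> e (F x) (FF n x) < \<epsilon>"
    if "p \<in> N" "q \<in> N" "x \<in> M" "\<epsilon> > 0" for p q x k \<epsilon>
  proof -
    define U where "U = {w \<in> topspace XX. fst w p \<in> MX.mball (G p) \<epsilon>}
       \<inter> {w \<in> topspace XX. fst w q \<in> MX.mball (G q) \<epsilon>}
       \<inter> {w \<in> topspace XX. snd w x \<in> NY.mball (F x) \<epsilon>}"
    have "openin XX U" unfolding U_def
      by (intro openin_Int openin_continuous_map_preimage[OF projG] openin_continuous_map_preimage[OF projF]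
          MX.openin_mball NY.openin_mball that)
    moreover have "z \<in> U" unfolding U_def using zX GM FN that by (simp add: zGF)
    ultimately obtain n where "n \<ge> k" "s n \<in> U" using clus by blast
    thus ?thesis unfolding U_def s_def using that by auto
  qed
  have Giso: "d (G p) (G q) = e p q" if p: "p \<in> N" and q: "q \<in> N" for p q
  proof (rule antisym)
    show "d (G p) (G q) \<le> e p q"
    proof (rule eps_le[where c = "2 + e p q"])
      fix t :: real assume t: "0 < t" "t \<le> 1"
      obtain k where k: "\<And>n. n \<ge> k \<Longrightarrow> L n \<le> 1 + t" using Lev[OF t(1)] by blast
      obtain n where n: "n \<ge> k" "d (G p) (GG n p) < t" "d (G q) (GG n q) < t"
        using near[OF p q x0 t(1), of k] by blast
      have "d (G p) (G q) \<le> d (G p) (GG n p) + d (GG n p) (GG n q) + d (GG n q) (G q)"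
        using MX.triangle GM[OF p] GM[OF q] GGM[OF p] GGM[OF q] by (smt (verit))
      also have "\<dots> \<le> t + L n * e p q + t"
        using n GG(2)[OF p q, of n] MX.commute[of "GG n q" "G q"] by simp
      also have "\<dots> \<le> t + (1 + t) * e p q + t"
        using k[OF n(1)] NY.nonneg[of p q] by (simp add: mult_right_mono)
      finally show "d (G p) (G q) \<le> e p q + t * (2 + e p q)" by (simp add: algebra_simps)
    qed
    show "e p q \<le> d (G p) (G q)"
    proof (rule eps_le[where c = "d (G p) (G q) + 4"])
      fix t :: real assume t: "0 < t" "t \<le> 1"
      obtain k where k: "\<And>n. n \<ge> k \<Longrightarrow> L n \<le> 1 + t" using Lev[OF t(1)] by blast
      obtain n where n: "n \<ge> k" "d (G p) (GG n p) < t" "d (G q) (GG n q) < t"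
        using near[OF p q x0 t(1), of k] by blast
      define D where "D = d (G p) (G q)"
      have D0: "D \<ge> 0" unfolding D_def using MX.nonneg by simp
      have "d (GG n p) (GG n q) \<le> d (GG n p) (G p) + d (G p) (G q) + d (G q) (GG n q)"
        using MX.triangle GM[OF p] GM[OF q] GGM[OF p] GGM[OF q] by (smt (verit))
      also have "\<dots> \<le> D + 2 * t" using n MX.commute[of "GG n p" "G p"] unfolding D_def by simp
      finally have dd: "d (GG n p) (GG n q) \<le> D + 2 * t" .
      have "e p q \<le> L n * d (GG n p) (GG n q)" using GG(3)[OF p q] .
      also have "\<dots> \<le> (1 + t) * (D + 2 * t)"
        using k[OF n(1)] dd L1[of n] MX.nonneg[of "GG n p" "GG n q"] t
        by (intro mult_mono) auto
      also have "\<dots> = D + t * (D + 2 + 2 * t)" by (simp add: algebra_simps)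
      also have "\<dots> \<le> D + t * (D + 4)" using t by (intro add_left_mono mult_left_mono) auto
      finally show "e p q \<le> d (G p) (G q) + t * (d (G p) (G q) + 4)" unfolding D_def .
    qed
  qed
  have GF: "G (F x) = x" if x: "x \<in> M" for x
  proof -
    have "d (G (F x)) x \<le> 0"
    proof (rule eps_le[where c = 5])
      fix t :: real assume t: "0 < t" "t \<le> 1"
      obtain n where n: "d (G (F x)) (GG n (F x)) < t" "e (F x) (FF n x) < t"
        using near[OF FN[OF x] FN[OF x] x t(1), of 0] by blast
      have "d (G (F x)) x \<le> d (G (F x)) (GG n (F x)) + d (GG n (F x)) (GG n (FF n x))"
        using MX.triangle GM[OF FN[OF x]] GGM[OF FN[OF x]] x GGF[OF x] by metis
      also have "\<dots> \<le> t + L n * e (F x) (FF n x)" using n(1) GG(2)[OF FN[OF x] FFN[OF x], of n n] by simp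
      also have "\<dots> \<le> t + 4 * t"
      proof -
        have "L n * e (F x) (FF n x) \<le> 4 * t"
          using L4[of n] n(2) NY.nonneg[of "F x" "FF n x"] by (intro mult_mono) auto
        thus ?thesis by linarith
      qed
      finally show "d (G (F x)) x \<le> 0 + t * 5" by simp
    qed
    thus ?thesis using MX.nonneg[of "G (F x)" x] MX.zero[OF GM[OF FN[OF x]] x] by simp
  qed
  have FG: "F (G p) = p" if p: "p \<in> N" for p
  proof -
    have "e (F (G p)) p \<le> 0"
    proof (rule eps_le[where c = 5])
      fix t :: real assume t: "0 < t" "t \<le> 1"
      obtain n where n: "d (G p) (GG n p) < t" "e (F (G p)) (FF n (G p)) < t"
        using near[OF p p GM[OF p] t(1), of 0] by blast
      have "e (F (G p)) p \<le> e (F (G p)) (FF n (G p)) + e (FF n (G p)) (FF n (GG n p))"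
        using NY.triangle FN[OF GM[OF p]] FFN[OF GM[OF p]] p FGG[OF p] by metis
      also have "\<dots> \<le> t + L n * d (G p) (GG n p)" using n(2) FFlip[OF GM[OF p] GGM[OF p], of n n] by simp
      also have "\<dots> \<le> t + 4 * t"
      proof -
        have "L n * d (G p) (GG n p) \<le> 4 * t"
          using L4[of n] n(1) MX.nonneg[of "G p" "GG n p"] by (intro mult_mono) auto
        thus ?thesis by linarith
      qed
      finally show "e (F (G p)) p \<le> 0 + t * 5" by simp
    qed
    thus ?thesis using NY.nonneg[of "F (G p)" p] NY.zero[OF FN[OF GM[OF p]] p] by simp
  qed
  show ?thesis unfolding isometric_def
  proof (intro exI conjI ballI)
    show "bij_betw F M N"
      by (rule bij_betw_byWitness[where f' = G]) (use GF FG FN GM in auto)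
    fix a b assume "a \<in> M" "b \<in> M"
    thus "e (F a) (F b) = d a b" using Giso[OF FN FN, of a b] GF by simp
  qed
qed
end
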